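(* Let $\rho_1,\rho_2\in[\lambda_0,\lambda_1]$ be the thresholds defined below. Then the optimal action on the boundary of the rectangle $[\lambda_0,\lambda_1]^2$ is as follows: (a) On $p_2=\lambda_0$: for $\lambda_0\le p_1\le\rho_1$, $(p_1,\lambda_0)\in\Phi_{B_b}$; for $\rho_1<p_1\le\lambda_1$, $(p_1,\lambda_0)\in\Phi_{B_1}$. (b) On $p_2=\lambda_1$: for $\rho_2\le p_1\le\lambda_1$, $(p_1,\lambda_1)\in\Phi_{B_b}$; for $\lambda_0\le p_1<\rho_2$, $(p_1,\lambda_1)\in\Phi_{B_2}$. (c) On $p_1=\lambda_0$: for $\lambda_0\le p_2\le\rho_1$, $(\lambda_0,p_2)\in\Phi_{B_b}$; for $\rho_1<p_2\le\lambda_1$, $(\lambda_0,p_2)\in\Phi_{B_2}$. (d) On $p_1=\lambda_1$: for $\rho_2\le p_2\le\lambda_1$, $(\lambda_1,p_2)\in\Phi_{B_b}$; for $\lambda_0\le p_2<\rho_2$, $(\lambda_1,p_2)\in\Phi_{B_1}$.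
   Context: Fix parameters $0\le\lambda_0\le\lambda_1\le 1$, a discount factor $\beta\in[0,1)$, and rates $0<R_l<R_h<2R_l$. Let $\alpha=\lambda_1-\lambda_0$ and $T(p)=\alpha p+\lambda_0$. The model consists of two independent, identical Gilbert–Elliott channels with $\Pr[\text{good}\mid\text{good}]=\lambda_1$ and $\Pr[\text{good}\mid\text{bad}]=\lambda_0$. The belief state is $(p_1,p_2)\in[0,1]^2$, and there are three actions, $B_b$, $B_1$ and $B_2$. Let $V:[0,1]^2\to\mathbb R$ be the optimal expected total discounted reward, i.e. the unique bounded function satisfying $V=\max\{V_{B_b},V_{B_1},V_{B_2}\}$, where $V_{B_b}(p_1,p_2)=p_1R_l+p_2R_l+\beta[(1-p_1)(1-p_2)V(\lambda_0,\lambda_0)+p_1(1-p_2)V(\lambda_1,\lambda_0)+(1-p_1)p_2V(\lambda_0,\lambda_1)+p_1p_2V(\lambda_1,\lambda_1)]$, $V_{B_1}(p_1,p_2)=p_1R_h+\beta[(1-p_1)V(\lambda_0,T(p_2))+p_1V(\lambda_1,T(p_2))]$, $V_{B_2}(p_1,p_2)=p_2R_h+\beta[(1-p_2)V(T(p_1),\lambda_0)+p_2V(T(p_1),\lambda_1)]$. For $a\in\{B_b,B_1,B_2\}$, the decision region is $\Phi_a=\{(p_1,p_2)\in[0,1]^2: V(p_1,p_2)=V_a(p_1,p_2)\}$. The thresholds $\rho_1,\rho_2\in[\lambda_0,\lambda_1]$ are defined by $\{p_1\in[\lambda_0,\lambda_1]:(p_1,\lambda_0)\in\Phi_{B_b}\}=[\lambda_0,\rho_1]$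 and $\{p_1\in[\lambda_0,\lambda_1]:(p_1,\lambda_1)\in\Phi_{B_b}\}=[\rho_2,\lambda_1]$; the paper establishes that both sets are intervals of this form. *)

theory Defs
  imports Complex_Main
begin

datatype action = Bb | B1 | B2

definition Tmap :: "real \<Rightarrow> real \<Rightarrow> real \<Rightarrow> real" where
  "Tmap l0 l1 p = (l1 - l0) * p + l0"

fun Qval :: "real \<Rightarrow> real \<Rightarrow> real \<Rightarrow> real \<Rightarrow> real \<Rightarrow> (real \<Rightarrow> real \<Rightarrow> real)
              \<Rightarrow> action \<Rightarrow> real \<Rightarrow> real \<Rightarrow> real" where
  "Qval l0 l1 \<beta> Rl Rh V Bb p1 p2 =
     p1 * Rl + p2 * Rl + \<beta> * ((1 - p1) * (1 - p2) * V l0 l0 + p1 * (1 - p2) * V l1 l0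
        + (1 - p1) * p2 * V l0 l1 + p1 * p2 * V l1 l1)"
| "Qval l0 l1 \<beta> Rl Rh V B1 p1 p2 =
     p1 * Rh + \<beta> * ((1 - p1) * V l0 (Tmap l0 l1 p2) + p1 * V l1 (Tmap l0 l1 p2))"
| "Qval l0 l1 \<beta> Rl Rh V B2 p1 p2 =
     p2 * Rh + \<beta> * ((1 - p2) * V (Tmap l0 l1 p1) l0 + p2 * V (Tmap l0 l1 p1) l1)"

definition is_opt_value :: "real \<Rightarrow> real \<Rightarrow> real \<Rightarrow> real \<Rightarrow> real \<Rightarrow> (real \<Rightarrow> real \<Rightarrow> real) \<Rightarrow> bool" where
  "is_opt_value l0 l1 \<beta> Rl Rh V \<longleftrightarrow>
     (\<exists>M. \<forall>p1\<in>{0..1}. \<forall>p2\<in>{0..1}. \<bar>V p1 p2\<bar> \<le> M) \<and>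
     (\<forall>p1\<in>{0..1}. \<forall>p2\<in>{0..1}. V p1 p2 =
        max (Qval l0 l1 \<beta> Rl Rh V Bb p1 p2)
            (max (Qval l0 l1 \<beta> Rl Rh V B1 p1 p2) (Qval l0 l1 \<beta> Rl Rh V B2 p1 p2)))"

definition Phi :: "real \<Rightarrow> real \<Rightarrow> real \<Rightarrow> real \<Rightarrow> real \<Rightarrow> (real \<Rightarrow> real \<Rightarrow> real) \<Rightarrow> action \<Rightarrow> (real \<times> real) set" where
  "Phi l0 l1 \<beta> Rl Rh V a =
     {(p1, p2). p1 \<in> {0..1} \<and> p2 \<in> {0..1} \<and> V p1 p2 = Qval l0 l1 \<beta> Rl Rh V a p1 p2}"

end

theory Submission
  imports Defs
begin

lemma cc_abs:
  fixes p A B K :: real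
  assumes "0 \<le> p" "p \<le> 1" "\<bar>A\<bar> \<le> K" "\<bar>B\<bar> \<le> K"
  shows "\<bar>(1-p)*A + p*B\<bar> \<le> K"
proof -
  have "\<bar>(1-p)*A + p*B\<bar> \<le> \<bar>(1-p)*A\<bar> + \<bar>p*B\<bar>" by (rule abs_triangle_ineq)
  also have "\<dots> = (1-p)*\<bar>A\<bar> + p*\<bar>B\<bar>" using assms by (simp add: abs_mult)
  also have "\<dots> \<le> (1-p)*K + p*K" using assms by (intro add_mono mult_left_mono) auto
  finally show ?thesis by (simp add: algebra_simps)
qed

lemma cc_le:
  fixes p A B K :: real
  assumes "0 \<le> p" "p \<le> 1" "A \<le> K" "B \<le> K"
  shows "(1-p)*A + p*B \<le> K"
proof -
  have "(1-p)*A + p*B \<le> (1-p)*K + p*K" using assms by (intro add_mono mult_left_mono) auto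
  then show ?thesis by (simp add: algebra_simps)
qed

lemma max3_abs:
  fixes a b c a' b' c' e :: real
  assumes "\<bar>a-a'\<bar> \<le> e" "\<bar>b-b'\<bar> \<le> e" "\<bar>c-c'\<bar> \<le> e"
  shows "\<bar>max a (max b c) - max a' (max c' b')\<bar> \<le> e"
  using assms by (simp add: max_def abs_le_iff)

lemma max3_pick:
  fixes v a b c :: real
  shows "v = max a (max b c) \<Longrightarrow> v \<noteq> a \<Longrightarrow> c \<le> a \<Longrightarrow> v = b"
  by (auto simp: max_def split: if_splits)

lemma max3_pick2:
  fixes v a b c :: real
  shows "v = max a (max b c) \<Longrightarrow> v \<noteq> a \<Longrightarrow> b \<le> a \<Longrightarrow> v = c"
  by (auto simp: max_def split: if_splits)

lemma pow_bound_le0: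
  fixes d \<beta> C :: real
  assumes "\<And>n. d \<le> \<beta>^n * C" "0 \<le> \<beta>" "\<beta> < 1"
  shows "d \<le> 0"
proof -
  have "(\<lambda>n. \<beta>^n * C) \<longlonglongrightarrow> 0 * C"
    by (intro tendsto_mult_right LIMSEQ_power_zero) (use assms in auto)
  then show ?thesis using assms(1) by (intro LIMSEQ_le_const[where X="\<lambda>n. \<beta>^n * C"]) auto
qed

locale mdp =
  fixes l0 l1 \<beta> Rl Rh :: real and V :: "real \<Rightarrow> real \<Rightarrow> real" and M :: real
  assumes l0: "0 \<le> l0" "l0 \<le> l1" "l1 \<le> 1"
    and b: "0 \<le> \<beta>" "\<beta> < 1"
    and bnd: "\<And>p q. p \<in> {0..1} \<Longrightarrow> q \<in> {0..1} \<Longrightarrow> \<bar>V p q\<bar> \<le> M"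
    and bell: "\<And>p q. p \<in> {0..1} \<Longrightarrow> q \<in> {0..1} \<Longrightarrow> V p q =
        max (Qval l0 l1 \<beta> Rl Rh V Bb p q)
            (max (Qval l0 l1 \<beta> Rl Rh V B1 p q) (Qval l0 l1 \<beta> Rl Rh V B2 p q))"
begin

abbreviation "Q a p q \<equiv> Qval l0 l1 \<beta> Rl Rh V a p q"
abbreviation "T p \<equiv> Tmap l0 l1 p"

lemma T_in: "p \<in> {0..1} \<Longrightarrow> T p \<in> {0..1}"
proof -
  assume p: "p \<in> {0..1}"
  have "0 \<le> (l1 - l0) * p" using p l0 by auto
  moreover have "(l1 - l0) * p \<le> (l1 - l0) * 1" using p l0 by (intro mult_left_mono) auto
  ultimately show ?thesis using l0 by (auto simp: Tmap_def)
qed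

lemma T_eq: "T p = (1-p)*l0 + p*l1" by (simp add: Tmap_def algebra_simps)

lemma l0in: "l0 \<in> {0..1}" and l1in: "l1 \<in> {0..1}" using l0 by auto

lemma M0: "0 \<le> M" using bnd[of 0 0] by auto

lemma sym_n: "\<forall>p\<in>{0..1}. \<forall>q\<in>{0..1}. \<bar>V p q - V q p\<bar> \<le> \<beta>^n * (2*M)"
proof (induction n)
  case 0
  show ?case using bnd by (auto simp: abs_le_iff) (smt (verit) bnd)+
next
  case (Suc n)
  define K where "K = \<beta>^n * (2*M)"
  have IH: "\<And>p q. p \<in> {0..1} \<Longrightarrow> q \<in> {0..1} \<Longrightarrow> \<bar>V p q - V q p\<bar> \<le> K"
    using Suc.IH K_def by auto
  show ?case
  proof (intro ballI)
    fix p q :: real assume p: "p \<in> {0..1}" and q: "q \<in> {0..1}"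
    have Tp: "T p \<in> {0..1}" and Tq: "T q \<in> {0..1}" using T_in p q by auto
    have e1: "Q Bb p q - Q Bb q p = \<beta> * ((p - q) * (V l1 l0 - V l0 l1))"
      by (simp add: algebra_simps)
    have "\<bar>(p - q) * (V l1 l0 - V l0 l1)\<bar> \<le> K"
    proof -
      have "\<bar>(p - q) * (V l1 l0 - V l0 l1)\<bar> = \<bar>p - q\<bar> * \<bar>V l1 l0 - V l0 l1\<bar>" by (simp add: abs_mult)
      also have "\<dots> \<le> 1 * K" using p q IH[OF l1in l0in]
        by (intro mult_mono) auto
      finally show ?thesis by simp
    qed
    then have d1: "\<bar>Q Bb p q - Q Bb q p\<bar> \<le> \<beta> * K" using e1 b by (simp add: abs_mult mult_left_mono)
    have e2: "Q B1 p q - Q B2 q p = \<beta> * ((1-p)*(V l0 (T q) - V (T q) l0) + p*(V l1 (T q) - V (T q) l1))"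
      by (simp add: algebra_simps)
    have "\<bar>(1-p)*(V l0 (T q) - V (T q) l0) + p*(V l1 (T q) - V (T q) l1)\<bar> \<le> K"
      using p IH[OF l0in Tq] IH[OF l1in Tq] by (intro cc_abs) auto
    then have d2: "\<bar>Q B1 p q - Q B2 q p\<bar> \<le> \<beta> * K" using e2 b by (simp add: abs_mult mult_left_mono)
    have e3: "Q B2 p q - Q B1 q p = \<beta> * ((1-q)*(V (T p) l0 - V l0 (T p)) + q*(V (T p) l1 - V l1 (T p)))"
      by (simp add: algebra_simps)
    have "\<bar>(1-q)*(V (T p) l0 - V l0 (T p)) + q*(V (T p) l1 - V l1 (T p))\<bar> \<le> K"
      using q IH[OF Tp l0in] IH[OF Tp l1in] by (intro cc_abs) auto
    then have d3: "\<bar>Q B2 p q - Q B1 q p\<bar> \<le> \<beta> * K" using e3 b by (simp add: abs_mult mult_left_mono)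
    have "\<bar>V p q - V q p\<bar> \<le> \<beta> * K"
      unfolding bell[OF p q] bell[OF q p] by (rule max3_abs[OF d1 d2 d3])
    then show "\<bar>V p q - V q p\<bar> \<le> \<beta> ^ Suc n * (2 * M)" by (simp add: K_def)
  qed
qed

lemma sym: "p \<in> {0..1} \<Longrightarrow> q \<in> {0..1} \<Longrightarrow> V p q = V q p"
proof -
  assume p: "p \<in> {0..1}" and q: "q \<in> {0..1}"
  have "\<bar>V p q - V q p\<bar> \<le> 0" using sym_n p q b by (intro pow_bound_le0[where C="2*M"]) auto
  then show ?thesis by simp
qed

lemma cvx_n: "\<forall>a\<in>{0..1}. \<forall>c\<in>{0..1}. \<forall>t\<in>{0..1}. \<forall>x\<in>{0..1}.
   V ((1-t)*a + t*c) x - (1-t)*V a x - t*V c x \<le> \<beta>^n * (2*M)"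
proof (induction n)
  case 0
  show ?case
  proof (intro ballI)
    fix a c t x :: real assume a: "a \<in> {0..1}" and c: "c \<in> {0..1}" and t: "t \<in> {0..1}" and x: "x \<in> {0..1}"
    have m: "(1-t)*a + t*c \<in> {0..1}" using cc_le[of t a 1 c] a c t by auto
    have "- ((1-t)*V a x + t*V c x) \<le> M"
      using cc_abs[of t "V a x" M "V c x"] t bnd[OF a x] bnd[OF c x] by auto
    then show "V ((1-t)*a + t*c) x - (1-t)*V a x - t*V c x \<le> \<beta>^0 * (2*M)"
      using bnd[OF m x] by (simp add: abs_le_iff)
  qed
next
  case (Suc n)
  define K where "K = \<beta>^n * (2*M)"
  have IH: "\<And>a c t x. a \<in> {0..1} \<Longrightarrow> c \<in> {0..1} \<Longrightarrow> t \<in> {0..1} \<Longrightarrow> x \<in> {0..1} \<Longrightarrow>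
     V ((1-t)*a + t*c) x - (1-t)*V a x - t*V c x \<le> K"
    using Suc.IH K_def by auto
  have K0: "0 \<le> \<beta> * K" using b M0 by (simp add: K_def)
  show ?case
  proof (intro ballI)
    fix a c t x :: real assume a: "a \<in> {0..1}" and c: "c \<in> {0..1}" and t: "t \<in> {0..1}" and x: "x \<in> {0..1}"
    define m where "m = (1-t)*a + t*c"
    have m: "m \<in> {0..1}" using cc_le[of t a 1 c] a c t by (auto simp: m_def)
    have Va: "Q act a x \<le> V a x" and Vc: "Q act c x \<le> V c x" for act
      using bell[OF a x] bell[OF c x] by (cases act; auto)+
    have lin: "(1-t)*V a x + t*V c x \<ge> (1-t)*Q act a x + t*Q act c x" for act
      using Va[of act] Vc[of act] t by (intro add_mono mult_left_mono) auto
    have "V m x - (1-t)*V a x - t*V c x \<le> \<beta> * K"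
    proof -
      have cases: "V m x = Q Bb m x \<or> V m x = Q B1 m x \<or> V m x = Q B2 m x"
        using bell[OF m x] by (auto simp: max_def)
      moreover have "Q Bb m x = (1-t)*Q Bb a x + t*Q Bb c x"
        by (simp add: m_def algebra_simps)
      moreover have "Q B1 m x = (1-t)*Q B1 a x + t*Q B1 c x"
        by (simp add: m_def algebra_simps)
      moreover have "Q B2 m x - (1-t)*Q B2 a x - t*Q B2 c x \<le> \<beta> * K"
      proof -
        have Tm: "T m = (1-t)*T a + t*T c" by (simp add: m_def Tmap_def algebra_simps)
        have e: "Q B2 m x - (1-t)*Q B2 a x - t*Q B2 c x =
          \<beta> * ((1-x)*(V (T m) l0 - (1-t)*V (T a) l0 - t*V (T c) l0)
              + x*(V (T m) l1 - (1-t)*V (T a) l1 - t*V (T c) l1))"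
          by (simp add: algebra_simps)
        have i0: "V (T m) l0 - (1-t)*V (T a) l0 - t*V (T c) l0 \<le> K"
          unfolding Tm using IH[OF T_in[OF a] T_in[OF c] t l0in] .
        have i1: "V (T m) l1 - (1-t)*V (T a) l1 - t*V (T c) l1 \<le> K"
          unfolding Tm using IH[OF T_in[OF a] T_in[OF c] t l1in] .
        have "(1-x)*(V (T m) l0 - (1-t)*V (T a) l0 - t*V (T c) l0)
              + x*(V (T m) l1 - (1-t)*V (T a) l1 - t*V (T c) l1) \<le> K"
          using x i0 i1 by (intro cc_le) auto
        then show ?thesis unfolding e using b by (simp add: mult_left_mono)
      qed
      ultimately show ?thesis using lin[of Bb] lin[of B1] lin[of B2] K0 by linarith
    qed
    then show "V ((1-t)*a + t*c) x - (1-t)*V a x - t*V c x \<le> \<beta> ^ Suc n * (2 * M)"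
      by (simp add: K_def m_def)
  qed
qed

lemma cvx1: "p \<in> {0..1} \<Longrightarrow> x \<in> {0..1} \<Longrightarrow> V (T p) x \<le> (1-p)*V l0 x + p*V l1 x"
proof -
  assume p: "p \<in> {0..1}" and x: "x \<in> {0..1}"
  have "V ((1-p)*l0 + p*l1) x - (1-p)*V l0 x - p*V l1 x \<le> 0"
    using cvx_n p x l0in l1in b by (intro pow_bound_le0[where C="2*M"]) auto
  then show ?thesis by (simp add: T_eq)
qed

lemma cvx2: "p \<in> {0..1} \<Longrightarrow> x \<in> {0..1} \<Longrightarrow> V x (T p) \<le> (1-p)*V x l0 + p*V x l1"
  using cvx1 sym T_in l0in l1in by metis


lemma Q2_le:
  assumes p: "l0 \<le> p" "p \<le> l1" and R: "0 < Rl" "Rh < 2 * Rl"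
  shows "Q B2 p l0 \<le> Q Bb p l0"
proof -
  have p01: "p \<in> {0..1}" using p l0 by auto
  have c0: "V (T p) l0 \<le> (1-p)*V l0 l0 + p*V l1 l0" using cvx1[OF p01 l0in] .
  have c1: "V (T p) l1 \<le> (1-p)*V l0 l1 + p*V l1 l1" using cvx1[OF p01 l1in] .
  have "(1-l0)*V (T p) l0 + l0*V (T p) l1 \<le> (1-l0)*((1-p)*V l0 l0 + p*V l1 l0) + l0*((1-p)*V l0 l1 + p*V l1 l1)"
    using c0 c1 l0 by (intro add_mono mult_left_mono) auto
  also have "\<dots> = (1 - p) * (1 - l0) * V l0 l0 + p * (1 - l0) * V l1 l0 + (1 - p) * l0 * V l0 l1 + p * l0 * V l1 l1"
    by (simp add: algebra_simps)
  finally have B: "\<beta> * ((1-l0)*V (T p) l0 + l0*V (T p) l1) \<le> \<beta> * ((1 - p) * (1 - l0) * V l0 l0 + p * (1 - l0) * V l1 l0 + (1 - p) * l0 * V l0 l1 + p * l0 * V l1 l1)"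
    using b by (intro mult_left_mono) auto
  have "l0 * Rh \<le> l0 * (2*Rl)" using l0 R by (intro mult_left_mono) auto
  also have "\<dots> \<le> (p + l0) * Rl" using p R by (simp add: algebra_simps)
  finally have A: "l0 * Rh \<le> p * Rl + l0 * Rl" by (simp add: algebra_simps)
  show ?thesis using A B by simp
qed

lemma Q1_le:
  assumes p: "l0 \<le> p" "p \<le> l1" and R: "Rl < Rh" "Rh < 2 * Rl"
  shows "Q B1 p l1 \<le> Q Bb p l1"
proof -
  have p01: "p \<in> {0..1}" using p l0 by auto
  have l1': "l1 \<in> {0..1}" using l1in .
  have c0: "V l0 (T l1) \<le> (1-l1)*V l0 l0 + l1*V l0 l1" using cvx2[OF l1' l0in] .
  have c1: "V l1 (T l1) \<le> (1-l1)*V l1 l0 + l1*V l1 l1" using cvx2[OF l1' l1in] .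
  have "(1-p)*V l0 (T l1) + p*V l1 (T l1) \<le> (1-p)*((1-l1)*V l0 l0 + l1*V l0 l1) + p*((1-l1)*V l1 l0 + l1*V l1 l1)"
    using c0 c1 p01 by (intro add_mono mult_left_mono) auto
  also have "\<dots> = (1 - p) * (1 - l1) * V l0 l0 + p * (1 - l1) * V l1 l0 + (1 - p) * l1 * V l0 l1 + p * l1 * V l1 l1"
    by (simp add: algebra_simps)
  finally have B: "\<beta> * ((1-p)*V l0 (T l1) + p*V l1 (T l1)) \<le> \<beta> * ((1 - p) * (1 - l1) * V l0 l0 + p * (1 - l1) * V l1 l0 + (1 - p) * l1 * V l0 l1 + p * l1 * V l1 l1)"
    using b by (intro mult_left_mono) auto
  have "p * (Rh - Rl) \<le> l1 * (Rh - Rl)" using p R by (intro mult_right_mono) auto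
  also have "\<dots> \<le> l1 * Rl" using l0 R by (intro mult_left_mono) auto
  finally have A: "p * Rh \<le> p * Rl + l1 * Rl" by (simp add: algebra_simps)
  show ?thesis using A B by simp
qed

end

theorem theorem6:
  fixes l0 l1 \<beta> Rl Rh \<rho>1 \<rho>2 :: real and V :: "real \<Rightarrow> real \<Rightarrow> real"
  assumes "0 \<le> l0" "l0 \<le> l1" "l1 \<le> 1"
    and "0 \<le> \<beta>" "\<beta> < 1"
    and "0 < Rl" "Rl < Rh" "Rh < 2 * Rl"
    and V: "is_opt_value l0 l1 \<beta> Rl Rh V"
    and "\<rho>1 \<in> {l0..l1}" "\<rho>2 \<in> {l0..l1}"
    and rho1: "{p1 \<in> {l0..l1}. (p1, l0) \<in> Phi l0 l1 \<beta> Rl Rh V Bb} = {l0..\<rho>1}"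
    and rho2: "{p1 \<in> {l0..l1}. (p1, l1) \<in> Phi l0 l1 \<beta> Rl Rh V Bb} = {\<rho>2..l1}"
  shows
    "(\<forall>p1. l0 \<le> p1 \<and> p1 \<le> \<rho>1 \<longrightarrow> (p1, l0) \<in> Phi l0 l1 \<beta> Rl Rh V Bb) \<and>
     (\<forall>p1. \<rho>1 < p1 \<and> p1 \<le> l1 \<longrightarrow> (p1, l0) \<in> Phi l0 l1 \<beta> Rl Rh V B1) \<and>
     (\<forall>p1. \<rho>2 \<le> p1 \<and> p1 \<le> l1 \<longrightarrow> (p1, l1) \<in> Phi l0 l1 \<beta> Rl Rh V Bb) \<and>
     (\<forall>p1. l0 \<le> p1 \<and> p1 < \<rho>2 \<longrightarrow> (p1, l1) \<in> Phi l0 l1 \<beta> Rl Rh V B2) \<and>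
     (\<forall>p2. l0 \<le> p2 \<and> p2 \<le> \<rho>1 \<longrightarrow> (l0, p2) \<in> Phi l0 l1 \<beta> Rl Rh V Bb) \<and>
     (\<forall>p2. \<rho>1 < p2 \<and> p2 \<le> l1 \<longrightarrow> (l0, p2) \<in> Phi l0 l1 \<beta> Rl Rh V B2) \<and>
     (\<forall>p2. \<rho>2 \<le> p2 \<and> p2 \<le> l1 \<longrightarrow> (l1, p2) \<in> Phi l0 l1 \<beta> Rl Rh V Bb) \<and>
     (\<forall>p2. l0 \<le> p2 \<and> p2 < \<rho>2 \<longrightarrow> (l1, p2) \<in> Phi l0 l1 \<beta> Rl Rh V B1)"
proof -
  obtain M where M: "\<forall>p1\<in>{0..1}. \<forall>p2\<in>{0..1}. \<bar>V p1 p2\<bar> \<le> M"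
    using V unfolding is_opt_value_def by blast
  interpret mdp l0 l1 \<beta> Rl Rh V M
  proof
    show "0 \<le> l0" "l0 \<le> l1" "l1 \<le> 1" "0 \<le> \<beta>" "\<beta> < 1" using assms by auto
    show "\<And>p q. p \<in> {0..1} \<Longrightarrow> q \<in> {0..1} \<Longrightarrow> \<bar>V p q\<bar> \<le> M" using M by blast
    show "\<And>p q. p \<in> {0..1} \<Longrightarrow> q \<in> {0..1} \<Longrightarrow> V p q =
        max (Qval l0 l1 \<beta> Rl Rh V Bb p q)
            (max (Qval l0 l1 \<beta> Rl Rh V B1 p q) (Qval l0 l1 \<beta> Rl Rh V B2 p q))"
      using V unfolding is_opt_value_def by blast
  qed
  have R: "0 < Rl" "Rl < Rh" "Rh < 2 * Rl" using assms by auto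
  have in01: "x \<in> {0..1}" if "l0 \<le> x" "x \<le> l1" for x using that l0 by auto
  have P: "(p, q) \<in> Phi l0 l1 \<beta> Rl Rh V a \<longleftrightarrow> p \<in> {0..1} \<and> q \<in> {0..1} \<and> V p q = Q a p q" for p q a
    by (simp add: Phi_def)
  have a1: "\<forall>p1. l0 \<le> p1 \<and> p1 \<le> \<rho>1 \<longrightarrow> (p1, l0) \<in> Phi l0 l1 \<beta> Rl Rh V Bb"
  proof (intro allI impI)
    fix p assume h: "l0 \<le> p \<and> p \<le> \<rho>1"
    then have "p \<in> {l0..\<rho>1}" by simp
    then have "p \<in> {p1 \<in> {l0..l1}. (p1, l0) \<in> Phi l0 l1 \<beta> Rl Rh V Bb}" by (simp only: rho1)
    then show "(p, l0) \<in> Phi l0 l1 \<beta> Rl Rh V Bb" by blast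
  qed
  have a2: "\<forall>p1. \<rho>1 < p1 \<and> p1 \<le> l1 \<longrightarrow> (p1, l0) \<in> Phi l0 l1 \<beta> Rl Rh V B1"
  proof (intro allI impI)
    fix p assume h: "\<rho>1 < p \<and> p \<le> l1"
    then have pl: "l0 \<le> p" "p \<le> l1" using assms(10) by auto
    have "p \<notin> {l0..\<rho>1}" using h by auto
    then have "p \<notin> {p1 \<in> {l0..l1}. (p1, l0) \<in> Phi l0 l1 \<beta> Rl Rh V Bb}" unfolding rho1 .
    then have "(p, l0) \<notin> Phi l0 l1 \<beta> Rl Rh V Bb" using pl by simp
    then have nb: "V p l0 \<noteq> Q Bb p l0" using in01[OF pl] l0in unfolding P by simp
    have "V p l0 = max (Q Bb p l0) (max (Q B1 p l0) (Q B2 p l0))" using bell[OF in01[OF pl] l0in] .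
    then have "V p l0 = Q B1 p l0" using nb Q2_le[OF pl R(1) R(3)] by (rule max3_pick)
    then show "(p, l0) \<in> Phi l0 l1 \<beta> Rl Rh V B1" using in01[OF pl] l0in by (simp add: P)
  qed
  have b1: "\<forall>p1. \<rho>2 \<le> p1 \<and> p1 \<le> l1 \<longrightarrow> (p1, l1) \<in> Phi l0 l1 \<beta> Rl Rh V Bb"
  proof (intro allI impI)
    fix p assume h: "\<rho>2 \<le> p \<and> p \<le> l1"
    then have "p \<in> {\<rho>2..l1}" by simp
    then have "p \<in> {p1 \<in> {l0..l1}. (p1, l1) \<in> Phi l0 l1 \<beta> Rl Rh V Bb}" by (simp only: rho2)
    then show "(p, l1) \<in> Phi l0 l1 \<beta> Rl Rh V Bb" by blast
  qed
  have b2: "\<forall>p1. l0 \<le> p1 \<and> p1 < \<rho>2 \<longrightarrow> (p1, l1) \<in> Phi l0 l1 \<beta> Rl Rh V B2"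
  proof (intro allI impI)
    fix p assume h: "l0 \<le> p \<and> p < \<rho>2"
    then have pl: "l0 \<le> p" "p \<le> l1" using assms(11) by auto
    have "p \<notin> {\<rho>2..l1}" using h by auto
    then have "p \<notin> {p1 \<in> {l0..l1}. (p1, l1) \<in> Phi l0 l1 \<beta> Rl Rh V Bb}" unfolding rho2 .
    then have "(p, l1) \<notin> Phi l0 l1 \<beta> Rl Rh V Bb" using pl by simp
    then have nb: "V p l1 \<noteq> Q Bb p l1" using in01[OF pl] l1in unfolding P by simp
    have "V p l1 = max (Q Bb p l1) (max (Q B1 p l1) (Q B2 p l1))" using bell[OF in01[OF pl] l1in] .
    then have "V p l1 = Q B2 p l1" using nb Q1_le[OF pl R(2) R(3)] by (rule max3_pick2)
    then show "(p, l1) \<in> Phi l0 l1 \<beta> Rl Rh V B2" using in01[OF pl] l1in by (simp add: P)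
  qed
  have symV: "V p q = V q p" if "p \<in> {0..1}" "q \<in> {0..1}" for p q using sym that .
  have sBb: "Q Bb p q = Q Bb q p" for p q
    using symV[OF l0in l1in] by (simp add: algebra_simps)
  have s12: "Q B1 p q = Q B2 q p" if "p \<in> {0..1}" "q \<in> {0..1}" for p q
    using symV[OF l0in T_in[OF that(2)]] symV[OF l1in T_in[OF that(2)]] by simp
  have swap: "(q, p) \<in> Phi l0 l1 \<beta> Rl Rh V Bb" if "(p, q) \<in> Phi l0 l1 \<beta> Rl Rh V Bb" for p q
  proof -
    have h: "p \<in> {0..1}" "q \<in> {0..1}" "V p q = Q Bb p q" using that unfolding P by auto
    have "V q p = Q Bb q p" using h symV[OF h(1) h(2)] sBb[of p q] by simp
    then show ?thesis using h unfolding P by simp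
  qed
  have swap1: "(q, p) \<in> Phi l0 l1 \<beta> Rl Rh V B2" if "(p, q) \<in> Phi l0 l1 \<beta> Rl Rh V B1" for p q
  proof -
    have h: "p \<in> {0..1}" "q \<in> {0..1}" "V p q = Q B1 p q" using that unfolding P by auto
    have "V q p = Q B2 q p" using h symV[OF h(1) h(2)] s12[OF h(1) h(2)] by simp
    then show ?thesis using h unfolding P by simp
  qed
  have swap2: "(q, p) \<in> Phi l0 l1 \<beta> Rl Rh V B1" if "(p, q) \<in> Phi l0 l1 \<beta> Rl Rh V B2" for p q
  proof -
    have h: "p \<in> {0..1}" "q \<in> {0..1}" "V p q = Q B2 p q" using that unfolding P by auto
    have "V q p = Q B1 q p" using h(3) symV[OF h(1) h(2)] s12[OF h(2) h(1)] by (simp only:)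
    then show ?thesis using h unfolding P by simp
  qed
  show ?thesis using a1 a2 b1 b2 swap swap1 swap2 by blast
qed

end
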